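(* Let $A_1,A_2$ be $n$-dimensional algebras and let $K:A_1\to A_2$ be an algebra isomorphism (identified with its matrix). For $s_1\in A_1$ put $s_2=Ks_1$. Then for all $s_1$ in an open ball centered at $\mathbf{1}_{A_1}$ consisting only of units, the following two collections of (path-independent) line integrals coincide: $$\Big\{\int_{\mathbf{1}_{A_1}}^{s_1}[L_1t_1^{-1}]\cdot\mathbf{d}t_1:\ L_1\in\mathfrak{u}_{A_1}\Big\}=\Big\{\int_{\mathbf{1}_{A_2}}^{s_2}[L_2t_2^{-1}]\cdot\mathbf{d}t_2:\ L_2\in\mathfrak{u}_{A_2}\Big\}.$$
   Context: An "algebra" is a real finite-dimensional unital associative algebra with underlying vector space $\mathbb{R}^n$, standard basis and topology, elements as column vectors $s=(x_1,\dots,x_n)^T$, $\mathbf{d}s=(dx_1,\dots,dx_n)^T$, and "$\cdot$" the Euclidean dot product. An uncurling metric of $A$ is a real symmetric $n\times n$ matrix $L$ with $d\big((s^{-1})^TL\,\mathbf{d}s\big)=0$ on an open ball centered at $\mathbf{1}_A$ consisting only of units; the anti-rotor $\mathfrak{u}_A$ is the vector space of all uncurling metrics. For $L\in\mathfrak{u}_A$ the integral $\int_{\mathbf{1}}^{s}[Lt^{-1}]\cdot\mathbf{d}t$ is path-independent within such a ball. *)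

theory Defs
  imports "HOL-Analysis.Analysis"
begin

text \<open>An n-dimensional algebra: a real unital associative algebra structure on
  the vector space real^'n, given by a bilinear associative multiplication
  with two-sided unit.\<close>
definition is_algebra :: "(real^'n \<Rightarrow> real^'n \<Rightarrow> real^'n) \<Rightarrow> real^'n \<Rightarrow> bool" where
  "is_algebra m e \<longleftrightarrow> bilinear m \<and>
     (\<forall>x y z. m (m x y) z = m x (m y z)) \<and>
     (\<forall>x. m e x = x \<and> m x e = x)"

definition alg_units :: "(real^'n \<Rightarrow> real^'n \<Rightarrow> real^'n) \<Rightarrow> real^'n \<Rightarrow> (real^'n) set" where
  "alg_units m e = {s. \<exists>t. m s t = e \<and> m t s = e}"

definition alg_inv :: "(real^'n \<Rightarrow> real^'n \<Rightarrow> real^'n) \<Rightarrow> real^'n \<Rightarrow> real^'n \<Rightarrow> real^'n" where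
  "alg_inv m e s = (SOME t. m s t = e \<and> m t s = e)"

text \<open>The 1-form  omega(s) = (s^-1)^T L ds  with coefficient (row) vector
  (s^-1)^T L is closed at s: it is differentiable at s and its exterior
  derivative vanishes, i.e. d_j omega_i = d_i omega_j for all i, j.\<close>
definition closed_form_at :: "(real^'n \<Rightarrow> real^'n) \<Rightarrow> real^'n \<Rightarrow> bool" where
  "closed_form_at w s \<longleftrightarrow> (\<exists>D. (w has_derivative D) (at s) \<and>
       (\<forall>i j. D (axis j 1) $ i = D (axis i 1) $ j))"

definition uncurling_metric ::
  "(real^'n \<Rightarrow> real^'n \<Rightarrow> real^'n) \<Rightarrow> real^'n \<Rightarrow> real^'n^'n \<Rightarrow> bool" where
  "uncurling_metric m e L \<longleftrightarrow> transpose L = L \<and>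
     (\<exists>r>0. ball e r \<subseteq> alg_units m e \<and>
        (\<forall>s\<in>ball e r. closed_form_at (\<lambda>t. alg_inv m e t v* L) s))"

text \<open>The anti-rotor: the set (vector space) of all uncurling metrics.\<close>
definition anti_rotor :: "(real^'n \<Rightarrow> real^'n \<Rightarrow> real^'n) \<Rightarrow> real^'n \<Rightarrow> (real^'n^'n) set" where
  "anti_rotor m e = {L. uncurling_metric m e L}"

text \<open>Line integral of the vector field f along the straight segment from a to b
  (path-independent within the balls considered, which are convex).\<close>
definition seg_line_integral :: "(real^'n \<Rightarrow> real^'n) \<Rightarrow> real^'n \<Rightarrow> real^'n \<Rightarrow> real" where
  "seg_line_integral f a b = integral {0..1} (\<lambda>t. f (a + t *\<^sub>R (b - a)) \<bullet> (b - a))"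

text \<open>Algebra isomorphism given by its matrix K.\<close>
definition alg_iso ::
  "(real^'n \<Rightarrow> real^'n \<Rightarrow> real^'n) \<Rightarrow> real^'n \<Rightarrow> (real^'n \<Rightarrow> real^'n \<Rightarrow> real^'n) \<Rightarrow> real^'n
    \<Rightarrow> real^'n^'n \<Rightarrow> bool" where
  "alg_iso m1 e1 m2 e2 K \<longleftrightarrow> invertible K \<and> K *v e1 = e2 \<and>
     (\<forall>x y. K *v m1 x y = m2 (K *v x) (K *v y))"

end

theory Submission
  imports Defs
begin

lemma alg_inv_unit:
  assumes "s \<in> alg_units m e"
  shows "m s (alg_inv m e s) = e \<and> m (alg_inv m e s) s = e"
proof -
  obtain t where "m s t = e \<and> m t s = e" using assms unfolding alg_units_def by blast
  then show ?thesis unfolding alg_inv_def by (rule someI[of "\<lambda>t. m s t = e \<and> m t s = e"])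
qed

lemma alg_inv_unique:
  assumes "is_algebra m e" "m s t = e" "m t s = e"
  shows "alg_inv m e s = t"
proof -
  have su: "s \<in> alg_units m e" using assms unfolding alg_units_def by blast
  define u where "u = alg_inv m e s"
  have u: "m s u = e" "m u s = e" using alg_inv_unit[OF su] u_def by auto
  have A: "\<forall>x y z. m (m x y) z = m x (m y z)" "\<forall>x. m e x = x \<and> m x e = x"
    using assms(1) unfolding is_algebra_def by auto
  have "t = m t (m s u)" using A u by simp
  also have "\<dots> = m (m t s) u" using A by simp
  also have "\<dots> = u" using A assms by simp
  finally show ?thesis using u_def by simp
qed

lemma iso_unit:
  assumes "is_algebra m1 e1" "is_algebra m2 e2" "alg_iso m1 e1 m2 e2 K"
    and "s \<in> alg_units m1 e1"
  shows "K *v s \<in> alg_units m2 e2 \<and> alg_inv m2 e2 (K *v s) = K *v alg_inv m1 e1 s"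
proof -
  define u where "u = alg_inv m1 e1 s"
  have u: "m1 s u = e1" "m1 u s = e1" using alg_inv_unit[OF assms(4)] u_def by auto
  have K: "K *v e1 = e2" "\<forall>x y. K *v m1 x y = m2 (K *v x) (K *v y)"
    using assms(3) unfolding alg_iso_def by auto
  have "m2 (K *v s) (K *v u) = e2" "m2 (K *v u) (K *v s) = e2"
    using K u by metis+
  then show ?thesis using alg_inv_unique[OF assms(2)] u_def unfolding alg_units_def by blast
qed

lemma iso_sym:
  assumes "alg_iso m1 e1 m2 e2 K" "Ki ** K = mat 1" "K ** Ki = mat 1"
  shows "alg_iso m2 e2 m1 e1 Ki"
proof -
  have K: "K *v e1 = e2" "\<And>x y. K *v m1 x y = m2 (K *v x) (K *v y)"
    using assms(1) unfolding alg_iso_def by auto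
  have KK: "\<And>x. Ki *v (K *v x) = x" "\<And>x. K *v (Ki *v x) = x"
    using assms(2,3) by (simp_all add: matrix_vector_mul_assoc)
  have "invertible Ki" unfolding invertible_def using assms(2,3) by blast
  moreover have "Ki *v e2 = e1" using K KK by metis
  moreover have "Ki *v m2 x y = m1 (Ki *v x) (Ki *v y)" for x y
    by (metis K(2) KK)
  ultimately show ?thesis unfolding alg_iso_def by blast
qed

lemma sym_matrix_iff:
  "(\<forall>i j. D (axis j 1) $ i = D (axis i 1) $ j) \<longleftrightarrow> transpose (matrix D) = matrix D"
  unfolding matrix_def transpose_def vec_eq_iff by auto

lemma incl:
  fixes m1 m2 :: "real^'n \<Rightarrow> real^'n \<Rightarrow> real^'n"
  assumes "is_algebra m1 e1" "is_algebra m2 e2" "alg_iso m1 e1 m2 e2 K"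
    and seg: "closed_segment e1 s1 \<subseteq> alg_units m1 e1"
    and L1: "L1 \<in> anti_rotor m1 e1"
  shows "\<exists>L2 \<in> anti_rotor m2 e2. seg_line_integral (\<lambda>t. L1 *v alg_inv m1 e1 t) e1 s1
      = seg_line_integral (\<lambda>t. L2 *v alg_inv m2 e2 t) e2 (K *v s1)"
proof -
  obtain Ki where KKi: "K ** Ki = mat 1" "Ki ** K = mat 1"
    using assms(3) unfolding alg_iso_def invertible_def by blast
  have KK: "\<And>x. Ki *v (K *v x) = x" "\<And>x. K *v (Ki *v x) = x"
    using KKi by (simp_all add: matrix_vector_mul_assoc)
  have Ke: "K *v e1 = e2" using assms(3) unfolding alg_iso_def by auto
  have Kie: "Ki *v e2 = e1" using Ke KK by metis
  define L2 where "L2 = transpose Ki ** L1 ** Ki"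
  obtain r1 where r1: "r1 > 0" "ball e1 r1 \<subseteq> alg_units m1 e1"
    "\<forall>s\<in>ball e1 r1. closed_form_at (\<lambda>t. alg_inv m1 e1 t v* L1) s"
    and L1s: "transpose L1 = L1"
    using L1 unfolding anti_rotor_def uncurling_metric_def by auto
  have L2s: "transpose L2 = L2"
    unfolding L2_def by (simp add: matrix_transpose_mul L1s matrix_mul_assoc)
  obtain B where B: "B > 0" "\<And>x. norm (Ki *v x) \<le> norm x * B"
    using bounded_linear.pos_bounded[OF matrix_vector_mul_bounded_linear[of Ki]] by blast
  define r2 where "r2 = r1 / B"
  have r2: "r2 > 0" using r1 B unfolding r2_def by simp
  have inball: "Ki *v t \<in> ball e1 r1" if "t \<in> ball e2 r2" for t
  proof -
    have "dist e1 (Ki *v t) = norm (Ki *v (e2 - t))"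
      using Kie by (simp add: dist_norm matrix_vector_mult_diff_distrib)
    also have "\<dots> \<le> norm (e2 - t) * B" by (rule B)
    also have "\<dots> < r2 * B" using that B by (simp add: dist_norm)
    also have "\<dots> = r1" using B unfolding r2_def by simp
    finally show ?thesis by simp
  qed
  have invK: "alg_inv m2 e2 t = K *v alg_inv m1 e1 (Ki *v t) \<and> t \<in> alg_units m2 e2"
    if "t \<in> ball e2 r2" for t
    using iso_unit[OF assms(1-3), of "Ki *v t"] inball[OF that] r1(2) KK by auto
  have w2eq: "alg_inv m2 e2 t v* L2 = transpose Ki *v (alg_inv m1 e1 (Ki *v t) v* L1)"
    if "t \<in> ball e2 r2" for t
  proof -
    have "alg_inv m2 e2 t v* L2 = transpose L2 *v alg_inv m2 e2 t" by simp
    also have "\<dots> = L2 *v (K *v alg_inv m1 e1 (Ki *v t))" using L2s invK[OF that] by simp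
    also have "\<dots> = transpose Ki *v (L1 *v alg_inv m1 e1 (Ki *v t))"
      unfolding L2_def by (simp add: matrix_vector_mul_assoc[symmetric] KK)
    also have "\<dots> = transpose Ki *v (alg_inv m1 e1 (Ki *v t) v* L1)"
      by (metis L1s transpose_matrix_vector)
    finally show ?thesis .
  qed
  have cf: "closed_form_at (\<lambda>t. alg_inv m2 e2 t v* L2) t" if t: "t \<in> ball e2 r2" for t
  proof -
    obtain D1 where D1: "((\<lambda>t. alg_inv m1 e1 t v* L1) has_derivative D1) (at (Ki *v t))"
      "\<forall>i j. D1 (axis j 1) $ i = D1 (axis i 1) $ j"
      using r1(3) inball[OF t] unfolding closed_form_at_def by blast
    have d0: "((\<lambda>x. Ki *v x) has_derivative (\<lambda>x. Ki *v x)) (at t)"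
      by (rule bounded_linear.has_derivative[OF matrix_vector_mul_bounded_linear has_derivative_ident])
    have d1: "((\<lambda>x. alg_inv m1 e1 (Ki *v x) v* L1) has_derivative (\<lambda>x. D1 (Ki *v x))) (at t)"
      using has_derivative_compose[OF d0 D1(1)] .
    have d2: "((\<lambda>x. transpose Ki *v (alg_inv m1 e1 (Ki *v x) v* L1)) has_derivative
        (\<lambda>x. transpose Ki *v D1 (Ki *v x))) (at t)"
      by (rule bounded_linear.has_derivative[OF matrix_vector_mul_bounded_linear d1])
    have d3: "((\<lambda>x. alg_inv m2 e2 x v* L2) has_derivative
        (\<lambda>x. transpose Ki *v D1 (Ki *v x))) (at t)"
      by (rule has_derivative_transform_within_open[OF d2 open_ball t]) (simp add: w2eq)
    have lin: "linear D1" using has_derivative_linear[OF D1(1)] .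
    have l0: "linear ((*v) Ki)" and l2: "linear ((*v) (transpose Ki))"
      by (rule matrix_vector_mul_linear)+
    have e: "(\<lambda>x. transpose Ki *v D1 (Ki *v x)) = ((*v) (transpose Ki) \<circ> D1) \<circ> ((*v) Ki)"
      by (simp only: o_def)
    have "matrix (((*v) (transpose Ki) \<circ> D1) \<circ> ((*v) Ki))
       = matrix ((*v) (transpose Ki) \<circ> D1) ** matrix ((*v) Ki)"
      by (rule matrix_compose[OF l0 linear_compose[OF lin l2]])
    also have "\<dots> = (matrix ((*v) (transpose Ki)) ** matrix D1) ** matrix ((*v) Ki)"
      by (simp only: matrix_compose[OF lin l2])
    finally have M: "matrix (\<lambda>x. transpose Ki *v D1 (Ki *v x)) = transpose Ki ** matrix D1 ** Ki"
      unfolding e by (simp only: matrix_of_matrix_vector_mul)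
    have S1: "transpose (matrix D1) = matrix D1" using D1(2) sym_matrix_iff by blast
    have "transpose (matrix (\<lambda>x. transpose Ki *v D1 (Ki *v x))) = matrix (\<lambda>x. transpose Ki *v D1 (Ki *v x))"
      unfolding M by (simp add: matrix_transpose_mul S1 matrix_mul_assoc)
    then have "\<forall>i j. (\<lambda>x. transpose Ki *v D1 (Ki *v x)) (axis j 1) $ i
        = (\<lambda>x. transpose Ki *v D1 (Ki *v x)) (axis i 1) $ j"
      by (rule sym_matrix_iff[THEN iffD2])
    then show ?thesis unfolding closed_form_at_def using d3 by blast
  qed
  have "L2 \<in> anti_rotor m2 e2"
    unfolding anti_rotor_def uncurling_metric_def using L2s r2 invK cf by blast
  moreover have "seg_line_integral (\<lambda>t. L1 *v alg_inv m1 e1 t) e1 s1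
      = seg_line_integral (\<lambda>t. L2 *v alg_inv m2 e2 t) e2 (K *v s1)"
    unfolding seg_line_integral_def
  proof (rule integral_cong)
    fix u :: real assume u: "u \<in> {0..1}"
    define p where "p = e1 + u *\<^sub>R (s1 - e1)"
    have "p = (1 - u) *\<^sub>R e1 + u *\<^sub>R s1" unfolding p_def by (simp add: algebra_simps)
    then have "p \<in> closed_segment e1 s1" using u unfolding closed_segment_def by auto
    then have pu: "p \<in> alg_units m1 e1" using seg by blast
    have Kp: "K *v p = e2 + u *\<^sub>R (K *v s1 - e2)"
      unfolding p_def using Ke
      by (simp add: matrix_vector_right_distrib matrix_vector_mult_diff_distrib matrix_vector_mult_scaleR)
    have iv: "alg_inv m2 e2 (K *v p) = K *v alg_inv m1 e1 p"
      using iso_unit[OF assms(1-3) pu] by blast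
    have d: "K *v s1 - e2 = K *v (s1 - e1)" using Ke by (simp add: matrix_vector_mult_diff_distrib)
    have "(L2 *v alg_inv m2 e2 (e2 + u *\<^sub>R (K *v s1 - e2))) \<bullet> (K *v s1 - e2)
        = ((L1 *v alg_inv m1 e1 p) v* Ki) \<bullet> (K *v (s1 - e1))"
      unfolding Kp[symmetric] iv unfolding d L2_def
      by (simp add: matrix_vector_mul_assoc[symmetric] KK)
    also have "\<dots> = (L1 *v alg_inv m1 e1 p) \<bullet> (s1 - e1)"
      by (simp add: dot_lmul_matrix KK)
    finally show "(L1 *v alg_inv m1 e1 (e1 + u *\<^sub>R (s1 - e1))) \<bullet> (s1 - e1) =
         (L2 *v alg_inv m2 e2 (e2 + u *\<^sub>R (K *v s1 - e2))) \<bullet> (K *v s1 - e2)"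
      unfolding p_def by simp
  qed
  ultimately show ?thesis by blast
qed

theorem theorem3p3:
  fixes m1 m2 :: "real^'n \<Rightarrow> real^'n \<Rightarrow> real^'n"
    and e1 e2 :: "real^'n" and K :: "real^'n^'n" and r :: real and s1 :: "real^'n"
  assumes "is_algebra m1 e1" and "is_algebra m2 e2"
    and "alg_iso m1 e1 m2 e2 K"
    and "r > 0" and "ball e1 r \<subseteq> alg_units m1 e1"
    and "s1 \<in> ball e1 r"
  shows "{seg_line_integral (\<lambda>t. L1 *v alg_inv m1 e1 t) e1 s1 | L1. L1 \<in> anti_rotor m1 e1}
       = {seg_line_integral (\<lambda>t. L2 *v alg_inv m2 e2 t) e2 (K *v s1) | L2. L2 \<in> anti_rotor m2 e2}"
proof -
  have seg: "closed_segment e1 s1 \<subseteq> alg_units m1 e1"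
  proof -
    have "closed_segment e1 s1 \<subseteq> ball e1 r"
      by (rule closed_segment_subset) (use assms(4,6) in \<open>auto simp: convex_ball\<close>)
    then show ?thesis using assms(5) by blast
  qed
  obtain Ki where KKi: "K ** Ki = mat 1" "Ki ** K = mat 1"
    using assms(3) unfolding alg_iso_def invertible_def by blast
  have KK: "\<And>x. Ki *v (K *v x) = x"
    using KKi by (simp_all add: matrix_vector_mul_assoc)
  have Ke: "K *v e1 = e2" using assms(3) unfolding alg_iso_def by auto
  have iso2: "alg_iso m2 e2 m1 e1 Ki" using iso_sym[OF assms(3) KKi(2,1)] .
  have seg2: "closed_segment e2 (K *v s1) \<subseteq> alg_units m2 e2"
  proof
    fix x assume "x \<in> closed_segment e2 (K *v s1)"
    then obtain u where u: "0 \<le> u" "u \<le> 1" "x = (1 - u) *\<^sub>R e2 + u *\<^sub>R (K *v s1)"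
      unfolding closed_segment_def by auto
    have "(1 - u) *\<^sub>R e1 + u *\<^sub>R s1 \<in> closed_segment e1 s1"
      using u unfolding closed_segment_def by auto
    then have "(1 - u) *\<^sub>R e1 + u *\<^sub>R s1 \<in> alg_units m1 e1" using seg by blast
    moreover have "x = K *v ((1 - u) *\<^sub>R e1 + u *\<^sub>R s1)"
      using u(3) Ke by (simp add: matrix_vector_right_distrib matrix_vector_mult_scaleR)
    ultimately show "x \<in> alg_units m2 e2" using iso_unit[OF assms(1-3)] by auto
  qed
  show ?thesis
  proof
    show "{seg_line_integral (\<lambda>t. L1 *v alg_inv m1 e1 t) e1 s1 | L1. L1 \<in> anti_rotor m1 e1}
       \<subseteq> {seg_line_integral (\<lambda>t. L2 *v alg_inv m2 e2 t) e2 (K *v s1) | L2. L2 \<in> anti_rotor m2 e2}"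
      using incl[OF assms(1-3) seg] by blast
  next
    show "{seg_line_integral (\<lambda>t. L2 *v alg_inv m2 e2 t) e2 (K *v s1) | L2. L2 \<in> anti_rotor m2 e2}
       \<subseteq> {seg_line_integral (\<lambda>t. L1 *v alg_inv m1 e1 t) e1 s1 | L1. L1 \<in> anti_rotor m1 e1}"
      using incl[OF assms(2,1) iso2 seg2] KK by fastforce
  qed
qed

end
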